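(* Let $M\ge 1$ be an integer, $\Delta x>0$, and consider the cells $C_j=[x_{j-\frac12},x_{j+\frac12}]$ with centers $x_j=j\Delta x$, $j\in\{-M,\dots,M\}$. Let $H:[0,\infty)\to\mathbb{R}$ be differentiable, let $V:\mathbb{R}\to\mathbb{R}$, and let $(W_k)_{k\in\{-2M,\dots,2M\}}$ be real numbers (approximations of the interaction potential $W$). Suppose the cell averages $\overline\rho_j\ge 0$, $j\in\{-M,\dots,M\}$, are given at time $t$, and define: \begin{itemize} \item slopes $(\rho_x)_j\in\mathbb{R}$ and point values $\rho_j^{\rm E}=\overline\rho_j+\frac{\Delta x}{2}(\rho_x)_j$, $\rho_j^{\rm W}=\overline\rho_j-\frac{\Delta x}{2}(\rho_x)_j$, where the slopes are chosen so that $\rho_j^{\rm E}\ge0$ and $\rho_j^{\rm W}\ge0$ for all $j$ (a positivity preserving piecewise linear reconstruction); \item $\xi_j=\Delta x\sum_{i=-M}^{M}W_{j-i}\overline\rho_i+H'(\overline\rho_j)+V(x_j)$; \item $u_{j+\frac12}=-\frac{\xi_{j+1}-\xi_j}{\Delta x}$, $u_{j+\frac12}^+=\max(u_{j+\frac12},0)$, $u_{j+\frac12}^-=\min(u_{j+\frac12},0)$ for $j=-M,\dots,M-1$; \item fluxes $F_{j+\frac12}=u_{j+\frac12}^+\rho_j^{\rm E}+u_{j+\frac12}^-\rho_{j+1}^{\rm W}$ for $j=-M,\dots,M-1$, and $F_{-M-\frac12}=F_{M+\frac12}=0$. \end{itemize} Let $\Delta t>0$ and define the forward Euler update $\overline\rho_j(t+\Delta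 t)=\overline\rho_j-\frac{\Delta t}{\Delta x}\big(F_{j+\frac12}-F_{j-\frac12}\big)$. If \[ \Delta t\le\frac{\Delta x}{2a},\qquad a=\max_{j}\big\{u_{j+\frac12}^+,\,-u_{j+\frac12}^-\big\}, \] then $\overline\rho_j(t+\Delta t)\ge0$ for all $j$. Consequently, starting from nonnegative initial cell averages and choosing every time step according to this CFL condition (computed from the current values), all computed cell averages remain nonnegative.
   Context: This is the one-dimensional semi-discrete finite-volume scheme $\frac{d\overline\rho_j}{dt}=-\frac{F_{j+\frac12}-F_{j-\frac12}}{\Delta x}$ for the equation $\rho_t=\partial_x\big[\rho\,\partial_x\big(H'(\rho)+V(x)+W*\rho\big)\big]$ with $\rho_0\ge0$, discretized in time by the forward Euler method. In the paper the slopes are first taken as centered differences $(\overline\rho_{j+1}-\overline\rho_{j-1})/(2\Delta x)$ and, if a point value becomes negative, recomputed with the generalized minmod limiter; this is one example of a positivity preserving reconstruction. *)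

theory Defs
  imports Complex_Main
begin

text \<open>Hd is the derivative H' of H; W k approximates the interaction potential.\<close>

definition xi :: "int \<Rightarrow> real \<Rightarrow> (int \<Rightarrow> real) \<Rightarrow> (real \<Rightarrow> real) \<Rightarrow> (real \<Rightarrow> real)
    \<Rightarrow> (int \<Rightarrow> real) \<Rightarrow> int \<Rightarrow> real" where
  "xi M dx W Hd V rho j =
     dx * (\<Sum>i\<in>{-M..M}. W (j - i) * rho i) + Hd (rho j) + V (real_of_int j * dx)"

text \<open>u M ... j is u_{j+1/2}.\<close>
definition u :: "int \<Rightarrow> real \<Rightarrow> (int \<Rightarrow> real) \<Rightarrow> (real \<Rightarrow> real) \<Rightarrow> (real \<Rightarrow> real)
    \<Rightarrow> (int \<Rightarrow> real) \<Rightarrow> int \<Rightarrow> real" where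
  "u M dx W Hd V rho j = - (xi M dx W Hd V rho (j + 1) - xi M dx W Hd V rho j) / dx"

definition rhoE :: "real \<Rightarrow> (int \<Rightarrow> real) \<Rightarrow> (int \<Rightarrow> real) \<Rightarrow> int \<Rightarrow> real" where
  "rhoE dx rho s j = rho j + dx / 2 * s j"

definition rhoW :: "real \<Rightarrow> (int \<Rightarrow> real) \<Rightarrow> (int \<Rightarrow> real) \<Rightarrow> int \<Rightarrow> real" where
  "rhoW dx rho s j = rho j - dx / 2 * s j"

text \<open>flux ... j is F_{j+1/2}; it is zero for j = -M-1 and j = M (boundary fluxes).\<close>
definition flux :: "int \<Rightarrow> real \<Rightarrow> (int \<Rightarrow> real) \<Rightarrow> (real \<Rightarrow> real) \<Rightarrow> (real \<Rightarrow> real)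
    \<Rightarrow> (int \<Rightarrow> real) \<Rightarrow> (int \<Rightarrow> real) \<Rightarrow> int \<Rightarrow> real" where
  "flux M dx W Hd V rho s j =
     (if -M \<le> j \<and> j \<le> M - 1 then
        max (u M dx W Hd V rho j) 0 * rhoE dx rho s j
        + min (u M dx W Hd V rho j) 0 * rhoW dx rho s (j + 1)
      else 0)"

definition euler_step :: "int \<Rightarrow> real \<Rightarrow> real \<Rightarrow> (int \<Rightarrow> real) \<Rightarrow> (real \<Rightarrow> real) \<Rightarrow> (real \<Rightarrow> real)
    \<Rightarrow> (int \<Rightarrow> real) \<Rightarrow> (int \<Rightarrow> real) \<Rightarrow> int \<Rightarrow> real" where
  "euler_step M dx dt W Hd V rho s j =
     rho j - dt / dx * (flux M dx W Hd V rho s j - flux M dx W Hd V rho s (j - 1))"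

definition cfl_a :: "int \<Rightarrow> real \<Rightarrow> (int \<Rightarrow> real) \<Rightarrow> (real \<Rightarrow> real) \<Rightarrow> (real \<Rightarrow> real)
    \<Rightarrow> (int \<Rightarrow> real) \<Rightarrow> real" where
  "cfl_a M dx W Hd V rho =
     Max ((\<lambda>j. max (max (u M dx W Hd V rho j) 0) (- min (u M dx W Hd V rho j) 0)) ` {-M..M-1})"

end

theory Submission
  imports Defs
begin

lemma aux: "(a::real) \<le> e/2 \<Longrightarrow> -w/2 \<le> b \<Longrightarrow> r = (e+w)/2 \<Longrightarrow> 0 \<le> r - a + b"
  by (simp add: field_simps)

lemma one_step:
  fixes M :: int and dx dt :: real and Hd V :: "real \<Rightarrow> real" and W :: "int \<Rightarrow> real"
  assumes M: "M \<ge> 1" and dx: "dx > 0"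
    and EW: "\<forall>j\<in>{-M..M}. rhoE dx rho s j \<ge> 0 \<and> rhoW dx rho s j \<ge> 0"
    and dt: "dt > 0" and cfl: "dt * (2 * cfl_a M dx W Hd V rho) \<le> dx"
    and j: "j \<in> {-M..M}"
  shows "euler_step M dx dt W Hd V rho s j \<ge> 0"
proof -
  let ?u = "u M dx W Hd V rho"
  let ?a = "cfl_a M dx W Hd V rho"
  let ?E = "rhoE dx rho s" and ?W = "rhoW dx rho s"
  let ?F = "flux M dx W Hd V rho s"
  have ua: "max (?u k) 0 \<le> ?a \<and> - min (?u k) 0 \<le> ?a" if "k \<in> {-M..M-1}" for k
  proof -
    have "max (max (?u k) 0) (- min (?u k) 0) \<le> ?a"
      unfolding cfl_a_def using that by (intro Max_ge) auto
    thus ?thesis by linarith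
  qed
  have lam: "dt / dx * ?a \<le> 1/2" using cfl dx by (simp add: field_simps)
  have lpos: "dt / dx \<ge> 0" using dt dx by simp
  have rj: "rho j = (?E j + ?W j) / 2" by (simp add: rhoE_def rhoW_def)
  have F1: "dt / dx * ?F j \<le> ?E j / 2"
  proof (cases "j \<le> M - 1")
    case True
    hence k: "j \<in> {-M..M-1}" using j by auto
    have Ej: "?E j \<ge> 0" using EW j by auto
    have Wj: "?W (j+1) \<ge> 0" using EW j True by auto
    have "?F j \<le> max (?u j) 0 * ?E j"
      using True j Wj by (simp add: flux_def mult_nonpos_nonneg)
    hence "dt/dx * ?F j \<le> dt/dx * (max (?u j) 0 * ?E j)"
      using lpos by (rule mult_left_mono)
    also have "\<dots> = (dt/dx * max (?u j) 0) * ?E j" by simp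
    also have "\<dots> \<le> (1/2) * ?E j"
    proof (rule mult_right_mono[OF _ Ej])
      have "dt/dx * max (?u j) 0 \<le> dt/dx * ?a" using ua[OF k] lpos by (intro mult_left_mono) auto
      thus "dt/dx * max (?u j) 0 \<le> 1/2" using lam by linarith
    qed
    finally show ?thesis by simp
  next
    case False
    thus ?thesis using EW j by (simp add: flux_def)
  qed
  have F2: "dt / dx * ?F (j-1) \<ge> - ?W j / 2"
  proof (cases "-M \<le> j - 1")
    case True
    hence k: "j - 1 \<in> {-M..M-1}" using j by auto
    have Wj: "?W j \<ge> 0" using EW j by auto
    have Ej: "?E (j-1) \<ge> 0" using EW j True by auto
    have "?F (j-1) \<ge> min (?u (j-1)) 0 * ?W j"
      using True j Ej by (simp add: flux_def)
    hence "dt/dx * ?F (j-1) \<ge> dt/dx * (min (?u (j-1)) 0 * ?W j)"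
      using lpos by (rule mult_left_mono)
    moreover have "dt/dx * (min (?u (j-1)) 0 * ?W j) = - ((dt/dx * - min (?u (j-1)) 0) * ?W j)" by simp
    moreover have "(dt/dx * - min (?u (j-1)) 0) * ?W j \<le> (1/2) * ?W j"
    proof (rule mult_right_mono[OF _ Wj])
      have "dt/dx * - min (?u (j-1)) 0 \<le> dt/dx * ?a" using ua[OF k] lpos by (intro mult_left_mono) auto
      thus "dt/dx * - min (?u (j-1)) 0 \<le> 1/2" using lam by linarith
    qed
    ultimately show ?thesis by linarith
  next
    case False
    thus ?thesis using EW j by (simp add: flux_def)
  qed
  have eq: "euler_step M dx dt W Hd V rho s j = rho j - dt/dx * ?F j + dt/dx * ?F (j-1)"
    by (simp add: euler_step_def algebra_simps)
  have "rho j - dt/dx * ?F j + dt/dx * ?F (j-1) \<ge> 0" by (rule aux[OF F1 F2 rj])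
  thus ?thesis unfolding eq .
qed

theorem theorem2p1:
  fixes M :: int and dx :: real and H Hd V :: "real \<Rightarrow> real" and W :: "int \<Rightarrow> real"
  assumes "M \<ge> 1" and "dx > 0"
    and "\<And>r. r \<ge> 0 \<Longrightarrow> (H has_real_derivative Hd r) (at r within {0..})"
  shows
   "(\<forall>(rho :: int \<Rightarrow> real) (s :: int \<Rightarrow> real) (dt :: real).
       (\<forall>j\<in>{-M..M}. rho j \<ge> 0)
     \<and> (\<forall>j\<in>{-M..M}. rhoE dx rho s j \<ge> 0 \<and> rhoW dx rho s j \<ge> 0)
     \<and> dt > 0
     \<and> dt * (2 * cfl_a M dx W Hd V rho) \<le> dx
     \<longrightarrow> (\<forall>j\<in>{-M..M}. euler_step M dx dt W Hd V rho s j \<ge> 0))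
  \<and> (\<forall>(rhos :: nat \<Rightarrow> int \<Rightarrow> real) (ss :: nat \<Rightarrow> int \<Rightarrow> real) (dts :: nat \<Rightarrow> real).
       (\<forall>j\<in>{-M..M}. rhos 0 j \<ge> 0)
     \<and> (\<forall>n. \<forall>j\<in>{-M..M}. rhoE dx (rhos n) (ss n) j \<ge> 0 \<and> rhoW dx (rhos n) (ss n) j \<ge> 0)
     \<and> (\<forall>n. dts n > 0 \<and> dts n * (2 * cfl_a M dx W Hd V (rhos n)) \<le> dx)
     \<and> (\<forall>n. \<forall>j\<in>{-M..M}. rhos (Suc n) j = euler_step M dx (dts n) W Hd V (rhos n) (ss n) j)
     \<longrightarrow> (\<forall>n. \<forall>j\<in>{-M..M}. rhos n j \<ge> 0))"
proof (intro conjI allI impI ballI)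
  fix rho s dt j
  assume h: "(\<forall>j\<in>{-M..M}. rho j \<ge> 0)
     \<and> (\<forall>j\<in>{-M..M}. rhoE dx rho s j \<ge> 0 \<and> rhoW dx rho s j \<ge> 0)
     \<and> dt > 0 \<and> dt * (2 * cfl_a M dx W Hd V rho) \<le> dx" and j: "j \<in> {-M..M}"
  show "euler_step M dx dt W Hd V rho s j \<ge> 0"
    using one_step[OF assms(1,2) _ _ _ j] h by blast
next
  fix rhos :: "nat \<Rightarrow> int \<Rightarrow> real" and ss :: "nat \<Rightarrow> int \<Rightarrow> real" and dts :: "nat \<Rightarrow> real" and n j
  assume h: "(\<forall>j\<in>{-M..M}. rhos 0 j \<ge> 0)
     \<and> (\<forall>n. \<forall>j\<in>{-M..M}. rhoE dx (rhos n) (ss n) j \<ge> 0 \<and> rhoW dx (rhos n) (ss n) j \<ge> 0)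
     \<and> (\<forall>n. dts n > 0 \<and> dts n * (2 * cfl_a M dx W Hd V (rhos n)) \<le> dx)
     \<and> (\<forall>n. \<forall>j\<in>{-M..M}. rhos (Suc n) j = euler_step M dx (dts n) W Hd V (rhos n) (ss n) j)"
    and j: "j \<in> {-M..M}"
  show "rhos n j \<ge> 0"
  proof (cases n)
    case 0 thus ?thesis using h j by blast
  next
    case (Suc m)
    have "euler_step M dx (dts m) W Hd V (rhos m) (ss m) j \<ge> 0"
      using one_step[OF assms(1,2) _ _ _ j] h by blast
    thus ?thesis using h j Suc by simp
  qed
qed

end
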